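(* Let $n,d,D$ be positive integers with $D\ge d$, let $\varepsilon>0$, and let $\psi,\phi:\mathbb{R}^d\to\mathbb{R}^D$ be fixed maps. Let $K$ be an $n\times d$ matrix with rows $K_1,\dots,K_n$. Then there is a subset $U\subseteq[n]$, determined by $K$ (and $\phi,\varepsilon$) alone, with $|U|\le D/\varepsilon$, such that for every $n\times d$ matrix $Q$ with rows $Q_1,\dots,Q_n$ and every $i\in[n]$ with $\sum_{\ell=1}^n\langle\psi(Q_i),\phi(K_\ell)\rangle^2>0$, we have $\{j\in[n]: A_{ij}\ge\varepsilon\}\subseteq U$, where $A_{ij}=\frac{\langle\psi(Q_i),\phi(K_j)\rangle^2}{\sum_{\ell=1}^n\langle\psi(Q_i),\phi(K_\ell)\rangle^2}$.
   Context: $[n]=\{1,\dots,n\}$; $\langle\cdot,\cdot\rangle$ is the standard inner product on $\mathbb{R}^D$. *)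

theory Defs
  imports "HOL-Analysis.Analysis"
begin

text \<open>Attention-type weights: rows of the n x d matrices Q, K are given as functions
  from the index set {1..n} to real^'d.\<close>
definition attn_weight ::
  "nat \<Rightarrow> (real^'d \<Rightarrow> real^'D) \<Rightarrow> (real^'d \<Rightarrow> real^'D) \<Rightarrow>
   (nat \<Rightarrow> real^'d) \<Rightarrow> (nat \<Rightarrow> real^'d) \<Rightarrow> nat \<Rightarrow> nat \<Rightarrow> real" where
  "attn_weight n \<psi> \<phi> Q K i j =
     (\<psi> (Q i) \<bullet> \<phi> (K j))^2 / (\<Sum>l=1..n. (\<psi> (Q i) \<bullet> \<phi> (K l))^2)"

end

theory Submission
  imports Defs
begin

definition ip :: "nat \<Rightarrow> (nat \<Rightarrow> real) \<Rightarrow> (nat \<Rightarrow> real) \<Rightarrow> real" where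
  "ip n f g = (\<Sum>l=1..n. f l * g l)"

definition RR :: "nat \<Rightarrow> (nat \<Rightarrow> real) list \<Rightarrow> (nat \<Rightarrow> real) set" where
  "RR n hs = {f. \<exists>c. \<forall>l\<in>{1..n}. f l = (\<Sum>k<length hs. c k * (hs!k) l)}"

definition ON :: "nat \<Rightarrow> (nat \<Rightarrow> real) list \<Rightarrow> bool" where
  "ON n hs = (\<forall>a<length hs. \<forall>b<length hs. ip n (hs!a) (hs!b) = (if a = b then 1 else 0))"

lemma ip_sum_right: "ip n f (\<lambda>l. \<Sum>k\<in>A. c k * h k l) = (\<Sum>k\<in>A. c k * ip n f (h k))"
  unfolding ip_def by (simp add: sum_distrib_left sum_distrib_right mult_ac sum.swap[of _ A])

lemma ip_comm: "ip n f g = ip n g f"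
  unfolding ip_def by (simp add: mult.commute)

lemma ip_cong: "(\<And>l. l \<in> {1..n} \<Longrightarrow> f l = f' l) \<Longrightarrow> ip n f g = ip n f' g"
  unfolding ip_def by (rule sum.cong) auto

lemma ip_ON: assumes "ON n hs" "m < length hs"
  shows "ip n (\<lambda>l. \<Sum>k<length hs. c k * (hs!k) l) (hs!m) = c m"
proof -
  have "ip n (\<lambda>l. \<Sum>k<length hs. c k * (hs!k) l) (hs!m) = ip n (hs!m) (\<lambda>l. \<Sum>k<length hs. c k * (hs!k) l)"
    by (rule ip_comm)
  also have "\<dots> = (\<Sum>k<length hs. c k * ip n (hs!m) (hs!k))" by (rule ip_sum_right)
  also have "\<dots> = (\<Sum>k<length hs. if k = m then c k else 0)"
    using assms unfolding ON_def by (intro sum.cong) auto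
  also have "\<dots> = c m" using assms by simp
  finally show ?thesis .
qed

lemma RR_mono: "f \<in> RR n hs \<Longrightarrow> f \<in> RR n (hs @ [h])"
proof -
  assume "f \<in> RR n hs"
  then obtain c where c: "\<forall>l\<in>{1..n}. f l = (\<Sum>k<length hs. c k * (hs!k) l)"
    unfolding RR_def by blast
  define c' where "c' = (\<lambda>k. if k < length hs then c k else 0)"
  have "\<forall>l\<in>{1..n}. f l = (\<Sum>k<length (hs@[h]). c' k * ((hs@[h])!k) l)"
    using c by (simp add: c'_def nth_append)
  then show ?thesis unfolding RR_def by blast
qed

lemma gs: "finite G \<Longrightarrow> \<exists>hs. length hs \<le> card G \<and> ON n hs \<and> G \<subseteq> RR n hs"
proof (induction G rule: finite_induct)
  case empty
  show ?case by (rule exI[of _ "[]"]) (simp add: ON_def)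
next
  case (insert g G)
  then obtain hs where L: "length hs \<le> card G" and O: "ON n hs" and S: "G \<subseteq> RR n hs" by blast
  define p where "p = (\<lambda>l. \<Sum>k<length hs. ip n g (hs!k) * (hs!k) l)"
  define r where "r = (\<lambda>l. g l - p l)"
  have rperp: "ip n r (hs!m) = 0" if "m < length hs" for m
  proof -
    have "ip n r (hs!m) = ip n g (hs!m) - ip n p (hs!m)"
      unfolding ip_def r_def by (simp add: sum_subtractf left_diff_distrib)
    also have "ip n p (hs!m) = ip n g (hs!m)" unfolding p_def by (rule ip_ON[OF O that])
    finally show ?thesis by simp
  qed
  show ?case
  proof (cases "ip n r r = 0")
    case True
    have "\<forall>l\<in>{1..n}. r l * r l = 0"
      using True unfolding ip_def by (subst (asm) sum_nonneg_eq_0_iff) auto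
    then have "\<forall>l\<in>{1..n}. g l = p l" by (simp add: r_def)
    then have "g \<in> RR n hs" unfolding RR_def p_def by (intro CollectI exI[of _ "\<lambda>k. ip n g (hs!k)"])
    moreover have "length hs \<le> card (insert g G)" using L insert(1,2) by simp
    moreover have "insert g G \<subseteq> RR n hs" using \<open>g \<in> RR n hs\<close> S by (rule insert_subsetI)
    ultimately show ?thesis using O by (intro exI[of _ hs] conjI)
  next
    case False
    have "ip n r r \<ge> 0" unfolding ip_def by (intro sum_nonneg) simp
    then have rpos: "ip n r r > 0" using False by linarith
    define s where "s = sqrt (ip n r r)"
    have spos: "s > 0" using rpos by (simp add: s_def)
    have ss: "s * s = ip n r r" using rpos by (simp add: s_def)
    define h where "h = (\<lambda>l. r l / s)"
    have "ip n h h = (\<Sum>l=1..n. r l * r l / (s * s))" unfolding h_def ip_def by simp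
    also have "\<dots> = ip n r r / (s * s)" unfolding ip_def by (rule sum_divide_distrib[symmetric])
    finally have hh: "ip n h h = 1" using ss rpos by simp
    have hperp: "ip n h (hs!m) = 0" if "m < length hs" for m
    proof -
      have "ip n h (hs!m) = (\<Sum>l=1..n. r l * (hs!m) l / s)" unfolding h_def ip_def by simp
      also have "\<dots> = ip n r (hs!m) / s" unfolding ip_def by (rule sum_divide_distrib[symmetric])
      finally show ?thesis using rperp[OF that] by simp
    qed
    have O': "ON n (hs @ [h])"
      unfolding ON_def
    proof (intro allI impI)
      fix a b assume a: "a < length (hs@[h])" and b: "b < length (hs@[h])"
      show "ip n ((hs @ [h]) ! a) ((hs @ [h]) ! b) = (if a = b then 1 else 0)"
      proof (cases "a < length hs"; cases "b < length hs")
        assume "a < length hs" "b < length hs"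
        then show ?thesis using O unfolding ON_def by (simp add: nth_append)
      next
        assume "a < length hs" "\<not> b < length hs"
        then show ?thesis using b hperp[of a] by (simp add: nth_append ip_comm)
      next
        assume "\<not> a < length hs" "b < length hs"
        then show ?thesis using a hperp[of b] by (simp add: nth_append)
      next
        assume "\<not> a < length hs" "\<not> b < length hs"
        then show ?thesis using a b hh by (simp add: nth_append)
      qed
    qed
    define c where "c = (\<lambda>k. if k < length hs then ip n g (hs!k) else s)"
    have "\<forall>l\<in>{1..n}. g l = (\<Sum>k<length (hs@[h]). c k * ((hs@[h])!k) l)"
      using spos by (simp add: c_def nth_append p_def h_def r_def)
    then have "g \<in> RR n (hs @ [h])" unfolding RR_def by blast
    moreover have "length (hs @ [h]) \<le> card (insert g G)" using L insert(1,2) by simp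
    moreover have G': "G \<subseteq> RR n (hs @ [h])" using S RR_mono by blast
    moreover have "insert g G \<subseteq> RR n (hs @ [h])" using \<open>g \<in> RR n (hs @ [h])\<close> G' by (rule insert_subsetI)
    ultimately show ?thesis using O' by (intro exI[of _ "hs @ [h]"] conjI)
  qed
qed


lemma RR_sum: "finite A \<Longrightarrow> (\<forall>a\<in>A. f a \<in> RR n hs) \<Longrightarrow> (\<lambda>l. \<Sum>a\<in>A. w a * f a l) \<in> RR n hs"
proof (induction A rule: finite_induct)
  case empty
  show ?case unfolding RR_def by (intro CollectI exI[of _ "\<lambda>_. 0"]) simp
next
  case (insert a A)
  then obtain c where c: "\<forall>l\<in>{1..n}. (\<Sum>a\<in>A. w a * f a l) = (\<Sum>k<length hs. c k * (hs!k) l)"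
    unfolding RR_def by auto
  from insert obtain d where d: "\<forall>l\<in>{1..n}. f a l = (\<Sum>k<length hs. d k * (hs!k) l)"
    unfolding RR_def by auto
  have "\<forall>l\<in>{1..n}. (\<Sum>a\<in>insert a A. w a * f a l) = (\<Sum>k<length hs. (w a * d k + c k) * (hs!k) l)"
    using c d insert(1,2) by (simp add: algebra_simps sum.distrib sum_distrib_left)
  then show ?case unfolding RR_def by (intro CollectI exI[of _ "\<lambda>k. w a * d k + c k"])
qed

lemma RR_bound:
  assumes "ON n hs" "f \<in> RR n hs" "j \<in> {1..n}"
  shows "(f j)^2 \<le> ip n f f * (\<Sum>k<length hs. ((hs!k) j)^2)"
proof -
  obtain c where c: "\<forall>l\<in>{1..n}. f l = (\<Sum>k<length hs. c k * (hs!k) l)"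
    using assms(2) unfolding RR_def by blast
  define F where "F = (\<lambda>l. \<Sum>k<length hs. c k * (hs!k) l)"
  have "ip n f f = ip n F F"
    using c unfolding ip_def F_def by (intro sum.cong) auto
  also have "\<dots> = ip n F (\<lambda>l. \<Sum>k<length hs. c k * (hs!k) l)" by (simp add: F_def)
  also have "\<dots> = (\<Sum>k<length hs. c k * ip n F (hs!k))" by (rule ip_sum_right)
  also have "\<dots> = (\<Sum>k<length hs. (c k)^2)"
    using ip_ON[OF assms(1)] unfolding F_def by (intro sum.cong) (auto simp: power2_eq_square)
  finally have e: "ip n f f = (\<Sum>k<length hs. (c k)^2)" .
  have "(f j)^2 = (\<Sum>k<length hs. c k * (hs!k) j)^2" using c assms(3) by simp
  also have "\<dots> \<le> (\<Sum>k<length hs. (c k)^2) * (\<Sum>k<length hs. ((hs!k) j)^2)"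
    by (rule Cauchy_Schwarz_ineq_sum)
  finally show ?thesis using e by simp
qed

theorem theorem2:
  fixes n :: nat and \<epsilon> :: real
    and \<phi> :: "real^'d \<Rightarrow> real^'D"
    and K :: "nat \<Rightarrow> real^'d"
  assumes "n \<ge> 1" and "CARD('D) \<ge> CARD('d)" and "\<epsilon> > 0"
  shows "\<exists>U. U \<subseteq> {1..n} \<and> real (card U) \<le> real CARD('D) / \<epsilon> \<and>
           (\<forall>(\<psi> :: real^'d \<Rightarrow> real^'D) (Q :: nat \<Rightarrow> real^'d) i.
              i \<in> {1..n} \<and> (\<Sum>l=1..n. (\<psi> (Q i) \<bullet> \<phi> (K l))^2) > 0 \<longrightarrow>
              {j \<in> {1..n}. attn_weight n \<psi> \<phi> Q K i j \<ge> \<epsilon>} \<subseteq> U)"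
proof -
  define G where "G = (\<lambda>b::real^'D. \<lambda>l. \<phi> (K l) \<bullet> b) ` Basis"
  have fG: "finite G" unfolding G_def by simp
  obtain hs where L: "length hs \<le> card G" and O: "ON n hs" and S: "G \<subseteq> RR n hs"
    using gs[OF fG] by blast
  have "card G \<le> card (Basis :: (real^'D) set)" unfolding G_def by (rule card_image_le) simp
  then have LD: "length hs \<le> CARD('D)" using L by simp
  define \<tau> where "\<tau> = (\<lambda>j. \<Sum>k<length hs. ((hs!k) j)^2)"
  define U where "U = {j\<in>{1..n}. \<tau> j \<ge> \<epsilon>}"
  have sumtau: "(\<Sum>j=1..n. \<tau> j) = real (length hs)"
  proof -
    have "(\<Sum>j=1..n. \<tau> j) = (\<Sum>k<length hs. ip n (hs!k) (hs!k))"
      unfolding \<tau>_def ip_def by (subst sum.swap) (simp add: power2_eq_square)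
    also have "\<dots> = (\<Sum>k<length hs. 1)" using O unfolding ON_def by (intro sum.cong) auto
    finally show ?thesis by simp
  qed
  have "real (card U) * \<epsilon> = (\<Sum>j\<in>U. \<epsilon>)" by simp
  also have "\<dots> \<le> (\<Sum>j\<in>U. \<tau> j)" unfolding U_def by (intro sum_mono) auto
  also have "\<dots> \<le> (\<Sum>j=1..n. \<tau> j)"
    unfolding U_def \<tau>_def by (intro sum_mono2) (auto intro: sum_nonneg)
  also have "\<dots> \<le> real CARD('D)" using sumtau LD by simp
  finally have cardU: "real (card U) \<le> real CARD('D) / \<epsilon>"
    using assms(3) by (simp add: field_simps)
  have heavy: "{j \<in> {1..n}. attn_weight n \<psi> \<phi> Q K i j \<ge> \<epsilon>} \<subseteq> U"
    if pos: "(\<Sum>l=1..n. (\<psi> (Q i) \<bullet> \<phi> (K l))^2) > 0" for \<psi> :: "real^'d \<Rightarrow> real^'D" and Q i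
  proof
    fix j assume j: "j \<in> {j \<in> {1..n}. attn_weight n \<psi> \<phi> Q K i j \<ge> \<epsilon>}"
    define y where "y = \<psi> (Q i)"
    define f where "f = (\<lambda>l. y \<bullet> \<phi> (K l))"
    have fR: "f \<in> RR n hs"
    proof -
      have "\<forall>b\<in>(Basis::(real^'D) set). (\<lambda>l. \<phi> (K l) \<bullet> b) \<in> RR n hs"
        using S unfolding G_def by auto
      then have "(\<lambda>l. \<Sum>b\<in>(Basis::(real^'D) set). (y \<bullet> b) * (\<phi> (K l) \<bullet> b)) \<in> RR n hs"
        by (rule RR_sum[where w="\<lambda>b. y \<bullet> b" and f="\<lambda>b l. \<phi> (K l) \<bullet> b", OF finite_Basis])
      moreover have "(\<lambda>l. \<Sum>b\<in>(Basis::(real^'D) set). (y \<bullet> b) * (\<phi> (K l) \<bullet> b)) = f"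
        unfolding f_def by (rule ext, rule euclidean_inner[symmetric])
      ultimately show ?thesis by simp
    qed
    have Sdef: "ip n f f = (\<Sum>l=1..n. (\<psi> (Q i) \<bullet> \<phi> (K l))^2)"
      unfolding ip_def f_def y_def by (simp add: power2_eq_square)
    have Spos: "ip n f f > 0" using Sdef pos by simp
    have jn: "j \<in> {1..n}" using j by simp
    have "\<epsilon> \<le> (f j)^2 / ip n f f" using j Sdef unfolding attn_weight_def f_def y_def by simp
    then have "\<epsilon> * ip n f f \<le> (f j)^2" using Spos by (simp add: field_simps)
    also have "\<dots> \<le> ip n f f * \<tau> j" unfolding \<tau>_def by (rule RR_bound[OF O fR jn])
    finally have "\<epsilon> \<le> \<tau> j" using Spos by (simp add: mult.commute)
    then show "j \<in> U" unfolding U_def using jn by simp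
  qed
  have "U \<subseteq> {1..n}" unfolding U_def by auto
  then show ?thesis using cardU heavy by blast
qed

end
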